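(* Let $\langle A, \leq, \otimes, \mathbf{1}\rangle$ be a finitely distributive semi-lattice monoid (respectively, a distributive complete lattice monoid), with bottom element $\bot$. Let $Lex_\omega(A) = I(A)^\omega \cup I(A)^\ast A \{\bot\}^\omega$, with componentwise operation $\otimes^\omega$, identity $\mathbf{1}^\omega$, and order $a \leq_\omega b$ iff $a_{\leq k} \leq_k b_{\leq k}$ for all $k\geq1$. Then $\langle Lex_\omega(A), \leq_\omega, \otimes^\omega, \mathbf{1}^\omega\rangle$ is a finitely distributive semi-lattice monoid (respectively, a distributive complete lattice monoid).
   Context: A semi-lattice monoid (SLM) is $\langle A,\leq,\otimes,\mathbf{1}\rangle$ where $\langle A,\otimes,\mathbf{1}\rangle$ is a commutative monoid and $\langle A,\leq\rangle$ a partial order in which every finite subset (including $\emptyset$, whose LUB is the bottom $\bot$) has a least upper bound $\bigvee X$; a complete lattice monoid (CLM) is the same with LUBs for all subsets. Finitely distributive: $a\otimes\bigvee X=\bigvee\{a\otimes x\mid x\in X\}$ for all $a$ and finite $X$; distributive (CLM): for all $X$. $a<b$ means $a\leq b$, $a\neq b$. $I(A) = \{c \in A \mid \forall a,b \in A.\ a \otimes c = b \otimes c \Rightarrow a = b\}$, $C(A)=A\setminus I(A)$. $I(A)^\omega$: infinite sequences over $I(A)$; $I(A)^\ast A\{\bot\}^\omega$: infinite sequences consisting of a finite (possibly empty) sequence over $I(A)$, then one element of $A$, then infinitely many $\bot$. $a_{\leq k}$ is the length-$k$ prefix. The order $\leq_k$ on $A^k$: $\leq_1=\leq$, and for $k\geq2$,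 $a_1 \ldots a_k \leq_k b_1 \ldots b_k$ iff $a_1 < b_1$, or $a_1 = b_1$ and $a_2 \ldots a_k \leq_{k-1} b_2 \ldots b_k$. *)

theory Defs
  imports Main
begin

definition is_lub :: "'a set \<Rightarrow> ('a \<Rightarrow> 'a \<Rightarrow> bool) \<Rightarrow> 'a set \<Rightarrow> 'a \<Rightarrow> bool" where
  "is_lub A le X u \<longleftrightarrow> u \<in> A \<and> (\<forall>x\<in>X. le x u) \<and> (\<forall>v\<in>A. (\<forall>x\<in>X. le x v) \<longrightarrow> le u v)"

definition comm_monoid_on :: "'a set \<Rightarrow> ('a \<Rightarrow> 'a \<Rightarrow> 'a) \<Rightarrow> 'a \<Rightarrow> bool" where
  "comm_monoid_on A mult one \<longleftrightarrow>
     one \<in> A \<and> (\<forall>a\<in>A. \<forall>b\<in>A. mult a b \<in> A) \<and>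
     (\<forall>a\<in>A. \<forall>b\<in>A. \<forall>c\<in>A. mult (mult a b) c = mult a (mult b c)) \<and>
     (\<forall>a\<in>A. \<forall>b\<in>A. mult a b = mult b a) \<and>
     (\<forall>a\<in>A. mult a one = a)"

definition partial_order_on_rel :: "'a set \<Rightarrow> ('a \<Rightarrow> 'a \<Rightarrow> bool) \<Rightarrow> bool" where
  "partial_order_on_rel A le \<longleftrightarrow>
     (\<forall>a\<in>A. le a a) \<and>
     (\<forall>a\<in>A. \<forall>b\<in>A. le a b \<and> le b a \<longrightarrow> a = b) \<and>
     (\<forall>a\<in>A. \<forall>b\<in>A. \<forall>c\<in>A. le a b \<and> le b c \<longrightarrow> le a c)"

definition slm :: "'a set \<Rightarrow> ('a \<Rightarrow> 'a \<Rightarrow> bool) \<Rightarrow> ('a \<Rightarrow> 'a \<Rightarrow> 'a) \<Rightarrow> 'a \<Rightarrow> bool" where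
  "slm A le mult one \<longleftrightarrow> comm_monoid_on A mult one \<and> partial_order_on_rel A le \<and>
     (\<forall>X. finite X \<and> X \<subseteq> A \<longrightarrow> (\<exists>u. is_lub A le X u))"

definition clm :: "'a set \<Rightarrow> ('a \<Rightarrow> 'a \<Rightarrow> bool) \<Rightarrow> ('a \<Rightarrow> 'a \<Rightarrow> 'a) \<Rightarrow> 'a \<Rightarrow> bool" where
  "clm A le mult one \<longleftrightarrow> comm_monoid_on A mult one \<and> partial_order_on_rel A le \<and>
     (\<forall>X. X \<subseteq> A \<longrightarrow> (\<exists>u. is_lub A le X u))"

text \<open>a \<otimes> \<Or>X = \<Or>{a \<otimes> x | x \<in> X} (LUBs are unique in a partial order).\<close>
definition finitely_distributive :: "'a set \<Rightarrow> ('a \<Rightarrow> 'a \<Rightarrow> bool) \<Rightarrow> ('a \<Rightarrow> 'a \<Rightarrow> 'a) \<Rightarrow> bool" where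
  "finitely_distributive A le mult \<longleftrightarrow>
     (\<forall>a\<in>A. \<forall>X u. finite X \<and> X \<subseteq> A \<and> is_lub A le X u \<longrightarrow> is_lub A le ((\<lambda>x. mult a x) ` X) (mult a u))"

definition distributive :: "'a set \<Rightarrow> ('a \<Rightarrow> 'a \<Rightarrow> bool) \<Rightarrow> ('a \<Rightarrow> 'a \<Rightarrow> 'a) \<Rightarrow> bool" where
  "distributive A le mult \<longleftrightarrow>
     (\<forall>a\<in>A. \<forall>X u. X \<subseteq> A \<and> is_lub A le X u \<longrightarrow> is_lub A le ((\<lambda>x. mult a x) ` X) (mult a u))"

definition bot_of :: "'a set \<Rightarrow> ('a \<Rightarrow> 'a \<Rightarrow> bool) \<Rightarrow> 'a" where
  "bot_of A le = (THE u. is_lub A le {} u)"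

definition canc :: "'a set \<Rightarrow> ('a \<Rightarrow> 'a \<Rightarrow> 'a) \<Rightarrow> 'a set" where
  "canc A mult = {c \<in> A. \<forall>a\<in>A. \<forall>b\<in>A. mult a c = mult b c \<longrightarrow> a = b}"

text \<open>Lex_omega(A) = I(A)^omega \<union> I(A)^* A {bot}^omega, sequences indexed from 0.\<close>
definition lex_omega :: "'a set \<Rightarrow> ('a \<Rightarrow> 'a \<Rightarrow> bool) \<Rightarrow> ('a \<Rightarrow> 'a \<Rightarrow> 'a) \<Rightarrow> (nat \<Rightarrow> 'a) set" where
  "lex_omega A le mult =
     {s. \<forall>i. s i \<in> canc A mult} \<union>
     {s. \<exists>n. (\<forall>i<n. s i \<in> canc A mult) \<and> s n \<in> A \<and> (\<forall>i>n. s i = bot_of A le)}"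

text \<open>lex_le le k a b: the order \<le>_k on the length-k prefixes of a and b (k \<ge> 1).\<close>
fun lex_le :: "('a \<Rightarrow> 'a \<Rightarrow> bool) \<Rightarrow> nat \<Rightarrow> (nat \<Rightarrow> 'a) \<Rightarrow> (nat \<Rightarrow> 'a) \<Rightarrow> bool" where
  "lex_le le 0 a b = True"
| "lex_le le (Suc 0) a b = le (a 0) (b 0)"
| "lex_le le (Suc (Suc k)) a b =
     ((le (a 0) (b 0) \<and> a 0 \<noteq> b 0) \<or>
      (a 0 = b 0 \<and> lex_le le (Suc k) (\<lambda>i. a (Suc i)) (\<lambda>i. b (Suc i))))"

definition lex_omega_le :: "('a \<Rightarrow> 'a \<Rightarrow> bool) \<Rightarrow> (nat \<Rightarrow> 'a) \<Rightarrow> (nat \<Rightarrow> 'a) \<Rightarrow> bool" where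
  "lex_omega_le le a b \<longleftrightarrow> (\<forall>k\<ge>1. lex_le le k a b)"

definition mult_omega :: "('a \<Rightarrow> 'a \<Rightarrow> 'a) \<Rightarrow> (nat \<Rightarrow> 'a) \<Rightarrow> (nat \<Rightarrow> 'a) \<Rightarrow> (nat \<Rightarrow> 'a)" where
  "mult_omega mult a b = (\<lambda>i. mult (a i) (b i))"

definition one_omega :: "'a \<Rightarrow> (nat \<Rightarrow> 'a)" where
  "one_omega one = (\<lambda>i. one)"

end

theory Submission
  imports Defs
begin

lemma lex_le_Suc:
  "lex_le le (Suc k) a b \<longleftrightarrow>
    (\<exists>m<k. (\<forall>i<m. a i = b i) \<and> le (a m) (b m) \<and> a m \<noteq> b m) \<or>
    ((\<forall>i<k. a i = b i) \<and> le (a k) (b k))"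
proof (induction k arbitrary: a b)
  case 0
  then show ?case by simp
next
  case (Suc k)
  have e1: "(\<exists>m<Suc k. P m) \<longleftrightarrow> P 0 \<or> (\<exists>m<k. P (Suc m))" for P
    by (metis less_Suc_eq_0_disj Suc_less_eq zero_less_Suc)
  have e2: "(\<forall>m<Suc k. P m) \<longleftrightarrow> P 0 \<and> (\<forall>m<k. P (Suc m))" for P
    by (metis less_Suc_eq_0_disj Suc_less_eq zero_less_Suc)
  have e3: "(\<forall>i<Suc m. P i) \<longleftrightarrow> P 0 \<and> (\<forall>i<m. P (Suc i))" for P m
    by (metis less_Suc_eq_0_disj Suc_less_eq zero_less_Suc)
  show ?case
    apply (simp only: lex_le.simps Suc.IH e1 e2 e3)
    apply auto
    done
qed

lemma po_lub_unique:
  assumes "partial_order_on_rel S R" "is_lub S R X u" "is_lub S R X v"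
  shows "u = v"
  using assms unfolding partial_order_on_rel_def is_lub_def by blast


lemma bot_of_lub:
  assumes po: "partial_order_on_rel A le" and exb: "\<exists>u. is_lub A le {} u"
  shows "is_lub A le {} (bot_of A le)"
proof -
  obtain u where u: "is_lub A le {} u" using exb by blast
  have "\<And>v. is_lub A le {} v \<Longrightarrow> v = u" using po_lub_unique[OF po] u by blast
  then have "(THE v. is_lub A le {} v) = u" using u by (intro the_equality)
  then show ?thesis unfolding bot_of_def using u by simp
qed

primrec pre :: "('a set \<Rightarrow> 'a) \<Rightarrow> (nat \<Rightarrow> 'a) set \<Rightarrow> nat \<Rightarrow> 'a list" where
  "pre F X 0 = []"
| "pre F X (Suc k) = pre F X k @ [F ((\<lambda>x. x k) ` {x\<in>X. \<forall>i<k. x i = pre F X k ! i})]"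

lemma pre_len: "length (pre F X k) = k"
  by (induction k) auto

lemma pre_nth: "i < k \<Longrightarrow> pre F X k ! i = pre F X (Suc i) ! i"
proof (induction k)
  case 0 then show ?case by simp
next
  case (Suc k)
  show ?case
  proof (cases "i < k")
    case True
    then show ?thesis using Suc pre_len[of F X k] by (simp add: nth_append)
  next
    case False
    then have "i = k" using Suc by simp
    then show ?thesis by simp
  qed
qed

lemma pre_exists: fixes X :: "(nat \<Rightarrow> 'a) set" shows "\<exists>u. \<forall>k. u k = F ((\<lambda>x. x k) ` {x\<in>X. \<forall>i<k. x i = u i})"
proof -
  define u where "u k = pre F X (Suc k) ! k" for k
  have "u k = F ((\<lambda>x. x k) ` {x\<in>X. \<forall>i<k. x i = u i})" for k
  proof -
    have "\<forall>i<k. pre F X k ! i = u i" unfolding u_def using pre_nth by blast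
    then have "{x\<in>X. \<forall>i<k. x i = pre F X k ! i} = {x\<in>X. \<forall>i<k. x i = u i}" by auto
    moreover have "u k = F ((\<lambda>x. x k) ` {x\<in>X. \<forall>i<k. x i = pre F X k ! i})"
      unfolding u_def using pre_len[of F X k] by (simp add: nth_append)
    ultimately show ?thesis by simp
  qed
  then show ?thesis by blast
qed

locale lexb =
  fixes A :: "'a set" and le :: "'a \<Rightarrow> 'a \<Rightarrow> bool" and mult :: "'a \<Rightarrow> 'a \<Rightarrow> 'a" and one :: 'a
  assumes cm: "comm_monoid_on A mult one" and po: "partial_order_on_rel A le"
    and exb: "\<exists>u. is_lub A le {} u"
    and absorb: "\<And>a. a \<in> A \<Longrightarrow> mult a (bot_of A le) = bot_of A le"
begin

abbreviation "B \<equiv> bot_of A le"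
abbreviation "C \<equiv> canc A mult"
abbreviation "L \<equiv> lex_omega A le mult"
abbreviation "LE \<equiv> lex_omega_le le"

lemma A_refl: "a \<in> A \<Longrightarrow> le a a" using po unfolding partial_order_on_rel_def by blast
lemma A_antisym: "a \<in> A \<Longrightarrow> b \<in> A \<Longrightarrow> le a b \<Longrightarrow> le b a \<Longrightarrow> a = b"
  using po unfolding partial_order_on_rel_def by blast
lemma A_trans: "a \<in> A \<Longrightarrow> b \<in> A \<Longrightarrow> c \<in> A \<Longrightarrow> le a b \<Longrightarrow> le b c \<Longrightarrow> le a c"
  using po unfolding partial_order_on_rel_def by blast

lemma mclosed: "a \<in> A \<Longrightarrow> b \<in> A \<Longrightarrow> mult a b \<in> A" using cm unfolding comm_monoid_on_def by blast
lemma massoc: "a \<in> A \<Longrightarrow> b \<in> A \<Longrightarrow> c \<in> A \<Longrightarrow> mult (mult a b) c = mult a (mult b c)"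
  using cm unfolding comm_monoid_on_def by blast
lemma mcomm: "a \<in> A \<Longrightarrow> b \<in> A \<Longrightarrow> mult a b = mult b a" using cm unfolding comm_monoid_on_def by blast
lemma mone: "a \<in> A \<Longrightarrow> mult a one = a" using cm unfolding comm_monoid_on_def by blast
lemma one_in: "one \<in> A" using cm unfolding comm_monoid_on_def by blast

lemma bot_lub: "is_lub A le {} B" using bot_of_lub[OF po exb] .

lemma bot_in: "B \<in> A" using bot_lub unfolding is_lub_def by blast
lemma bot_le: "a \<in> A \<Longrightarrow> le B a" using bot_lub unfolding is_lub_def by blast

lemma lub_sub_bot: "X \<subseteq> {B} \<Longrightarrow> is_lub A le X u \<Longrightarrow> u = B"
  using A_antisym bot_in bot_le unfolding is_lub_def by blast

lemma is_lub_sub_bot: "X \<subseteq> {B} \<Longrightarrow> is_lub A le X B"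
  using bot_in bot_le A_refl unfolding is_lub_def by blast

lemma canc_sub: "C \<subseteq> A" unfolding canc_def by blast

lemma absorb2: "a \<in> A \<Longrightarrow> mult B a = B" using absorb mcomm bot_in by metis

lemma lex_char: "s \<in> L \<longleftrightarrow> (\<forall>i. s i \<in> A) \<and> (\<forall>i j. i < j \<and> s i \<notin> C \<longrightarrow> s j = B)"
proof
  assume "s \<in> L"
  then show "(\<forall>i. s i \<in> A) \<and> (\<forall>i j. i < j \<and> s i \<notin> C \<longrightarrow> s j = B)"
  proof (cases "\<forall>i. s i \<in> C")
    case True
    then show ?thesis using canc_sub by blast
  next
    case False
    with \<open>s \<in> L\<close> obtain n where n: "\<forall>i<n. s i \<in> C" "s n \<in> A" "\<forall>i>n. s i = B"
      unfolding lex_omega_def by blast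
    have "s i \<in> A" for i using n canc_sub bot_in by (cases "i < n"; cases "i = n") auto
    moreover have "s j = B" if "i < j" "s i \<notin> C" for i j
    proof -
      have "\<not> i < n" using n that by blast
      then show ?thesis using n that by auto
    qed
    ultimately show ?thesis by blast
  qed
next
  assume h: "(\<forall>i. s i \<in> A) \<and> (\<forall>i j. i < j \<and> s i \<notin> C \<longrightarrow> s j = B)"
  show "s \<in> L"
  proof (cases "\<forall>i. s i \<in> C")
    case True
    then show ?thesis unfolding lex_omega_def by blast
  next
    case False
    define n where "n = (LEAST i. s i \<notin> C)"
    have n1: "s n \<notin> C" using False unfolding n_def by (metis LeastI)
    have n2: "\<forall>i<n. s i \<in> C" unfolding n_def using not_less_Least by blast
    show ?thesis unfolding lex_omega_def using n1 n2 h by blast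
  qed
qed

lemma L_in: "s \<in> L \<Longrightarrow> s i \<in> A" using lex_char by blast

lemma LE_iff:
  assumes "\<forall>i. a i \<in> A" "\<forall>i. b i \<in> A"
  shows "LE a b \<longleftrightarrow> a = b \<or> (\<exists>m. (\<forall>i<m. a i = b i) \<and> le (a m) (b m) \<and> a m \<noteq> b m)"
proof
  assume h: "LE a b"
  show "a = b \<or> (\<exists>m. (\<forall>i<m. a i = b i) \<and> le (a m) (b m) \<and> a m \<noteq> b m)"
  proof (cases "a = b")
    case False
    then obtain j where "a j \<noteq> b j" by auto
    define m where "m = (LEAST i. a i \<noteq> b i)"
    have m1: "a m \<noteq> b m" unfolding m_def using \<open>a j \<noteq> b j\<close> by (rule LeastI[where P="\<lambda>i. a i \<noteq> b i"])
    have m2: "\<forall>i<m. a i = b i" unfolding m_def using not_less_Least by blast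
    have "Suc m \<ge> 1" by simp
    then have "lex_le le (Suc m) a b" using h unfolding lex_omega_le_def by blast
    then have "le (a m) (b m)" unfolding lex_le_Suc using m2 by blast
    then show ?thesis using m1 m2 by blast
  qed simp
next
  assume h: "a = b \<or> (\<exists>m. (\<forall>i<m. a i = b i) \<and> le (a m) (b m) \<and> a m \<noteq> b m)"
  show "LE a b" unfolding lex_omega_le_def
  proof (intro allI impI)
    fix k :: nat assume "k \<ge> 1"
    then obtain k' where k: "k = Suc k'" by (cases k) auto
    show "lex_le le k a b"
    proof (cases "a = b")
      case True
      then show ?thesis unfolding k lex_le_Suc using A_refl assms by blast
    next
      case False
      then obtain m where m: "\<forall>i<m. a i = b i" "le (a m) (b m)" "a m \<noteq> b m" using h by blast
      show ?thesis unfolding k lex_le_Suc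
      proof (cases "m < k'")
        case True then show "(\<exists>m<k'. (\<forall>i<m. a i = b i) \<and> le (a m) (b m) \<and> a m \<noteq> b m) \<or>
          ((\<forall>i<k'. a i = b i) \<and> le (a k') (b k'))" using m by blast
      next
        case False
        then have "\<forall>i<k'. a i = b i" using m by auto
        moreover have "le (a k') (b k')"
        proof (cases "k' = m")
          case True then show ?thesis using m by simp
        next
          case F: False
          then have "k' < m" using False by simp
          then show ?thesis using m A_refl assms by metis
        qed
        ultimately show "(\<exists>m<k'. (\<forall>i<m. a i = b i) \<and> le (a m) (b m) \<and> a m \<noteq> b m) \<or>
          ((\<forall>i<k'. a i = b i) \<and> le (a k') (b k'))" by blast
      qed
    qed
  qed
qed

lemma LEI: assumes "a \<in> L" "b \<in> L" shows
   "LE a b \<longleftrightarrow> a = b \<or> (\<exists>m. (\<forall>i<m. a i = b i) \<and> le (a m) (b m) \<and> a m \<noteq> b m)"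
proof (rule LE_iff)
  show "\<forall>i. a i \<in> A" using L_in assms(1) by blast
  show "\<forall>i. b i \<in> A" using L_in assms(2) by blast
qed

lemma po_L: "partial_order_on_rel L LE"
  unfolding partial_order_on_rel_def
proof (intro conjI ballI impI)
  fix a assume a: "a \<in> L" then show "LE a a" using LEI[OF a a] by simp
next
  fix a b assume ab: "a \<in> L" "b \<in> L" and h: "LE a b \<and> LE b a"
  show "a = b"
  proof (rule ccontr)
    assume ne: "a \<noteq> b"
    obtain m1 where m1: "\<forall>i<m1. a i = b i" "le (a m1) (b m1)" "a m1 \<noteq> b m1"
      using h ne LEI[OF ab] by blast
    have ne2: "b \<noteq> a" using ne by simp
    obtain m2 where m2: "\<forall>i<m2. b i = a i" "le (b m2) (a m2)" "b m2 \<noteq> a m2"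
      using h ne2 LEI[OF ab(2,1)] by blast
    show False
    proof (cases m1 m2 rule: linorder_cases)
      case less then have "b m1 = a m1" using m2(1) by simp
      then show ?thesis using m1(3) by simp
    next
      case greater then have "a m2 = b m2" using m1(1) by simp
      then show ?thesis using m2(3) by simp
    next
      case equal
      then have "le (b m1) (a m1)" using m2 by simp
      then show ?thesis using A_antisym[OF L_in[OF ab(1)] L_in[OF ab(2)]] m1 by simp
    qed
  qed
next
  fix a b c assume abc: "a \<in> L" "b \<in> L" "c \<in> L" and h: "LE a b \<and> LE b c"
  show "LE a c"
  proof (cases "a = b \<or> b = c")
    case True then show ?thesis using h by auto
  next
    case False
    obtain m1 where m1: "\<forall>i<m1. a i = b i" "le (a m1) (b m1)" "a m1 \<noteq> b m1"
      using h False LEI[OF abc(1,2)] by blast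
    obtain m2 where m2: "\<forall>i<m2. b i = c i" "le (b m2) (c m2)" "b m2 \<noteq> c m2"
      using h False LEI[OF abc(2,3)] by blast
    have "\<exists>m. (\<forall>i<m. a i = c i) \<and> le (a m) (c m) \<and> a m \<noteq> c m"
    proof (cases m1 m2 rule: linorder_cases)
      case less
      then have "(\<forall>i<m1. a i = c i) \<and> le (a m1) (c m1) \<and> a m1 \<noteq> c m1" using m1 m2 by auto
      then show ?thesis by blast
    next
      case greater
      then have "(\<forall>i<m2. a i = c i) \<and> le (a m2) (c m2) \<and> a m2 \<noteq> c m2" using m1 m2 by auto
      then show ?thesis by blast
    next
      case equal
      have A3: "a m1 \<in> A" "b m1 \<in> A" "c m1 \<in> A" using L_in abc by auto
      have "le (a m1) (c m1)" using A_trans[OF A3] m1 m2 equal by simp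
      moreover have "a m1 \<noteq> c m1"
      proof
        assume "a m1 = c m1"
        then have "le (b m1) (a m1)" using m2 equal by simp
        then show False using A_antisym[OF A3(1,2)] m1 by simp
      qed
      moreover have "\<forall>i<m1. a i = c i" using m1 m2 equal by simp
      ultimately show ?thesis by blast
    qed
    then show ?thesis using LEI[OF abc(1,3)] by blast
  qed
qed

lemma canc_mult: assumes "c \<in> C" "d \<in> C" shows "mult c d \<in> C"
proof -
  have cA: "c \<in> A" "d \<in> A" using assms canc_sub by auto
  have "a = b" if "a \<in> A" "b \<in> A" "mult a (mult c d) = mult b (mult c d)" for a b
  proof -
    have "mult (mult a c) d = mult (mult b c) d" using that massoc cA by simp
    then have "mult a c = mult b c" using assms(2) mclosed that cA unfolding canc_def by blast
    then show ?thesis using assms(1) that unfolding canc_def by blast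
  qed
  then show ?thesis unfolding canc_def using mclosed cA by blast
qed

lemma one_C: "one \<in> C" unfolding canc_def using one_in mone by auto

lemma one_L: "one_omega one \<in> L"
  unfolding lex_char one_omega_def using one_C one_in by simp

lemma mult_L: assumes "s \<in> L" "t \<in> L" shows "mult_omega mult s t \<in> L"
  unfolding lex_char
proof (intro conjI allI impI)
  fix i show "mult_omega mult s t i \<in> A" unfolding mult_omega_def using mclosed L_in assms by blast
next
  fix i j assume h: "i < j \<and> mult_omega mult s t i \<notin> C"
  then have "s i \<notin> C \<or> t i \<notin> C" using canc_mult unfolding mult_omega_def by blast
  then have "s j = B \<or> t j = B" using h assms lex_char by blast
  then show "mult_omega mult s t j = B" unfolding mult_omega_def
    using absorb absorb2 L_in assms by auto
qed

lemma cm_L: "comm_monoid_on L (mult_omega mult) (one_omega one)"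
  unfolding comm_monoid_on_def
proof (intro conjI ballI)
  show "one_omega one \<in> L" by (rule one_L)
next
  fix a b assume "a \<in> L" "b \<in> L" then show "mult_omega mult a b \<in> L" by (rule mult_L)
next
  fix a b c assume "a \<in> L" "b \<in> L" "c \<in> L"
  then show "mult_omega mult (mult_omega mult a b) c = mult_omega mult a (mult_omega mult b c)"
    unfolding mult_omega_def using massoc L_in by auto
next
  fix a b assume "a \<in> L" "b \<in> L"
  then show "mult_omega mult a b = mult_omega mult b a"
    unfolding mult_omega_def using mcomm L_in by auto
next
  fix a assume "a \<in> L"
  then show "mult_omega mult a (one_omega one) = a"
    unfolding mult_omega_def one_omega_def using mone L_in by auto
qed

abbreviation S :: "(nat \<Rightarrow> 'a) set \<Rightarrow> (nat \<Rightarrow> 'a) \<Rightarrow> nat \<Rightarrow> 'a set" where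
  "S X u k \<equiv> (\<lambda>x. x k) ` {x\<in>X. \<forall>i<k. x i = u i}"

lemma lub_rec:
  assumes X: "X \<subseteq> L" and u: "\<And>k. is_lub A le (S X u k) (u k)"
  shows "is_lub L LE X u"
proof -
  have uA: "\<forall>k. u k \<in> A" using u unfolding is_lub_def by blast
  have uL: "u \<in> L" unfolding lex_char
  proof (intro conjI allI impI)
    fix k show "u k \<in> A" using uA by blast
  next
    fix i j assume ij: "i < j \<and> u i \<notin> C"
    have "S X u j \<subseteq> {B}"
    proof
      fix y assume "y \<in> S X u j"
      then obtain x where x: "x \<in> X" "\<forall>i'<j. x i' = u i'" "y = x j" by blast
      have "x i = u i" using x(2) ij by blast
      then have "x i \<notin> C" using ij by simp
      then have "x j = B" using x(1) X ij lex_char by blast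
      then show "y \<in> {B}" using x(3) by simp
    qed
    then show "u j = B" using lub_sub_bot u by blast
  qed
  have xA: "\<forall>i. x i \<in> A" if "x \<in> X" for x using that X L_in by blast
  have upper: "LE x u" if x: "x \<in> X" for x
  proof (cases "x = u")
    case True then show ?thesis using LEI uL by blast
  next
    case False
    then obtain j where "x j \<noteq> u j" by auto
    define m where "m = (LEAST i. x i \<noteq> u i)"
    have m1: "x m \<noteq> u m" unfolding m_def using \<open>x j \<noteq> u j\<close> by (rule LeastI[where P="\<lambda>i. x i \<noteq> u i"])
    have m2: "\<forall>i<m. x i = u i" unfolding m_def using not_less_Least by blast
    have "x m \<in> S X u m" using x m2 by blast
    then have "le (x m) (u m)" using u[of m] unfolding is_lub_def by blast
    then show ?thesis using LEI[OF _ uL] x X m1 m2 by blast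
  qed
  have least: "LE u v" if v: "v \<in> L" and ub: "\<forall>x\<in>X. LE x v" for v
  proof (cases "u = v")
    case True then show ?thesis using LEI uL by blast
  next
    case False
    then obtain j where "u j \<noteq> v j" by auto
    define m where "m = (LEAST i. u i \<noteq> v i)"
    have m1: "u m \<noteq> v m" unfolding m_def using \<open>u j \<noteq> v j\<close> by (rule LeastI[where P="\<lambda>i. u i \<noteq> v i"])
    have m2: "\<forall>i<m. u i = v i" unfolding m_def using not_less_Least by blast
    have "le y (v m)" if y: "y \<in> S X u m" for y
    proof -
      obtain x where x: "x \<in> X" "\<forall>i<m. x i = u i" "y = x m" using y by blast
      have xv: "\<forall>i<m. x i = v i" using x(2) m2 by simp
      have "LE x v" using ub x by blast
      then have "x = v \<or> (\<exists>m'. (\<forall>i<m'. x i = v i) \<and> le (x m') (v m') \<and> x m' \<noteq> v m')"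
        using LEI[OF _ v] x X by blast
      then have "le (x m) (v m)"
      proof
        assume "x = v" then show ?thesis using A_refl L_in v by simp
      next
        assume "\<exists>m'. (\<forall>i<m'. x i = v i) \<and> le (x m') (v m') \<and> x m' \<noteq> v m'"
        then obtain m' where m': "\<forall>i<m'. x i = v i" "le (x m') (v m')" "x m' \<noteq> v m'" by blast
        show ?thesis
        proof (cases m' m rule: linorder_cases)
          case less then show ?thesis using xv m'(3) by blast
        next
          case equal then show ?thesis using m'(2) by simp
        next
          case greater then have "x m = v m" using m'(1) by blast
          then show ?thesis using A_refl L_in v by simp
        qed
      qed
      then show ?thesis using x(3) by simp
    qed
    then have "le (u m) (v m)" using u[of m] L_in[OF v] unfolding is_lub_def by blast
    then show ?thesis using LEI[OF uL v] m1 m2 by blast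
  qed
  show ?thesis unfolding is_lub_def using uL upper least by blast
qed

lemma lub_exists:
  assumes ex: "\<And>Y k. Y \<subseteq> X \<Longrightarrow> \<exists>v. is_lub A le ((\<lambda>x. x k) ` Y) v"
  shows "\<exists>u. \<forall>k. is_lub A le (S X u k) (u k)"
proof -
  define F where "F Y = (THE v. is_lub A le Y v)" for Y
  obtain u where u: "\<forall>k. u k = F (S X u k)" using pre_exists[of F X] by blast
  have "is_lub A le (S X u k) (u k)" for k
  proof -
    obtain v where v: "is_lub A le (S X u k) v" using ex[of "{x\<in>X. \<forall>i<k. x i = u i}" k] by blast
    have "F (S X u k) = v" unfolding F_def
    proof (rule the_equality)
      show "is_lub A le (S X u k) v" by (rule v)
      fix w assume "is_lub A le (S X u k) w" then show "w = v" using po_lub_unique[OF po _ v] by blast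
    qed
    moreover have "u k = F (S X u k)" using u by blast
    ultimately have "u k = v" by (rule trans[rotated])
    then show ?thesis using v by (rule ssubst)
  qed
  then show ?thesis by blast
qed

lemma dist_lemma:
  assumes a: "a \<in> L" and X: "X \<subseteq> L" and u: "\<And>k. is_lub A le (S X u k) (u k)"
    and D: "\<And>k. is_lub A le ((\<lambda>y. mult (a k) y) ` S X u k) (mult (a k) (u k))"
  shows "is_lub L LE ((\<lambda>x. mult_omega mult a x) ` X) (mult_omega mult a u)"
proof (rule lub_rec)
  show "(\<lambda>x. mult_omega mult a x) ` X \<subseteq> L" using mult_L a X by blast
next
  fix k
  have uA: "\<forall>k. u k \<in> A" using u unfolding is_lub_def by blast
  show "is_lub A le (S ((\<lambda>x. mult_omega mult a x) ` X) (mult_omega mult a u) k) (mult_omega mult a u k)"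
  proof (cases "\<forall>i<k. a i \<in> C")
    case True
    have eq: "(\<forall>i<k. mult_omega mult a x i = mult_omega mult a u i) \<longleftrightarrow> (\<forall>i<k. x i = u i)"
      if x: "x \<in> X" for x
    proof
      assume h: "\<forall>i<k. mult_omega mult a x i = mult_omega mult a u i"
      show "\<forall>i<k. x i = u i"
      proof (intro allI impI)
        fix i assume i: "i < k"
        have xi: "x i \<in> A" using x X L_in by blast
        have ai: "a i \<in> A" using a L_in by blast
        have "mult (a i) (x i) = mult (a i) (u i)" using h i unfolding mult_omega_def by blast
        then have "mult (x i) (a i) = mult (u i) (a i)" using mcomm xi ai uA by metis
        then show "x i = u i" using True i xi uA unfolding canc_def by blast
      qed
    next
      assume "\<forall>i<k. x i = u i"
      then show "\<forall>i<k. mult_omega mult a x i = mult_omega mult a u i" unfolding mult_omega_def by simp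
    qed
    have "{y \<in> (\<lambda>x. mult_omega mult a x) ` X. \<forall>i<k. y i = mult_omega mult a u i}
        = (\<lambda>x. mult_omega mult a x) ` {x\<in>X. \<forall>i<k. x i = u i}"
      using eq by blast
    then have "S ((\<lambda>x. mult_omega mult a x) ` X) (mult_omega mult a u) k = (\<lambda>y. mult (a k) y) ` S X u k"
      unfolding mult_omega_def by (simp add: image_image)
    then show ?thesis using D[of k] unfolding mult_omega_def by simp
  next
    case False
    then obtain i where i: "i < k" "a i \<notin> C" by blast
    then have ak: "a k = B" using a lex_char by blast
    have "S ((\<lambda>x. mult_omega mult a x) ` X) (mult_omega mult a u) k \<subseteq> {B}"
      unfolding mult_omega_def using ak absorb2 X L_in by auto
    moreover have "mult_omega mult a u k = B" unfolding mult_omega_def using ak absorb2 uA by simp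
    ultimately show ?thesis using is_lub_sub_bot by simp
  qed
qed

lemma gen:
  fixes P :: "(nat \<Rightarrow> 'a) set \<Rightarrow> bool" and Q :: "'a set \<Rightarrow> bool"
  assumes lubA: "\<And>X. Q X \<Longrightarrow> X \<subseteq> A \<Longrightarrow> \<exists>u. is_lub A le X u"
    and Pimg: "\<And>X Y k. P X \<Longrightarrow> Y \<subseteq> X \<Longrightarrow> Q ((\<lambda>x. x k) ` Y)"
    and distA: "\<And>a X u. a \<in> A \<Longrightarrow> Q X \<Longrightarrow> X \<subseteq> A \<Longrightarrow> is_lub A le X u \<Longrightarrow>
        is_lub A le ((\<lambda>x. mult a x) ` X) (mult a u)"
  shows "\<forall>X. P X \<and> X \<subseteq> L \<longrightarrow> (\<exists>u. is_lub L LE X u)"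
    and "\<forall>a\<in>L. \<forall>X u. P X \<and> X \<subseteq> L \<and> is_lub L LE X u \<longrightarrow>
        is_lub L LE ((\<lambda>x. mult_omega mult a x) ` X) (mult_omega mult a u)"
proof -
  have ex: "\<exists>u. \<forall>k. is_lub A le (S X u k) (u k)" if "P X" "X \<subseteq> L" for X
  proof (rule lub_exists)
    fix Y k assume "Y \<subseteq> X"
    moreover have "(\<lambda>x. x k) ` Y \<subseteq> A" using \<open>Y \<subseteq> X\<close> that(2) L_in by blast
    ultimately show "\<exists>v. is_lub A le ((\<lambda>x. x k) ` Y) v" using lubA[OF Pimg[OF that(1)]] by simp
  qed
  show "\<forall>X. P X \<and> X \<subseteq> L \<longrightarrow> (\<exists>u. is_lub L LE X u)"
  proof (intro allI impI)
    fix X assume h: "P X \<and> X \<subseteq> L"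
    then obtain u where "\<forall>k. is_lub A le (S X u k) (u k)" using ex by blast
    then have "is_lub L LE X u" using lub_rec[of X u] h by blast
    then show "\<exists>u. is_lub L LE X u" by blast
  qed
  show "\<forall>a\<in>L. \<forall>X u. P X \<and> X \<subseteq> L \<and> is_lub L LE X u \<longrightarrow>
        is_lub L LE ((\<lambda>x. mult_omega mult a x) ` X) (mult_omega mult a u)"
  proof (intro ballI allI impI)
    fix a X u assume a: "a \<in> L" and h: "P X \<and> X \<subseteq> L \<and> is_lub L LE X u"
    obtain u' where u': "\<forall>k. is_lub A le (S X u' k) (u' k)" using ex h by blast
    then have "is_lub L LE X u'" using lub_rec[of X u'] h by blast
    moreover have "is_lub L LE X u" using h by blast
    ultimately have uu: "u = u'" using po_lub_unique[OF po_L] by blast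
    have D: "is_lub A le ((\<lambda>y. mult (a k) y) ` S X u' k) (mult (a k) (u' k))" for k
    proof (rule distA)
      show "a k \<in> A" using a L_in by blast
      show "Q (S X u' k)" using h by (intro Pimg) auto
      show "S X u' k \<subseteq> A" using h L_in by blast
      show "is_lub A le (S X u' k) (u' k)" using u' by blast
    qed
    show "is_lub L LE ((\<lambda>x. mult_omega mult a x) ` X) (mult_omega mult a u)"
      unfolding uu using h u' D by (intro dist_lemma[OF a]) auto
  qed
qed

end

theorem proposition6:
  fixes A :: "'a set" and le :: "'a \<Rightarrow> 'a \<Rightarrow> bool"
    and mult :: "'a \<Rightarrow> 'a \<Rightarrow> 'a" and one :: 'a
  shows
    "(slm A le mult one \<and> finitely_distributive A le mult \<longrightarrow>
        slm (lex_omega A le mult) (lex_omega_le le) (mult_omega mult) (one_omega one) \<and>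
        finitely_distributive (lex_omega A le mult) (lex_omega_le le) (mult_omega mult))
     \<and>
     (clm A le mult one \<and> distributive A le mult \<longrightarrow>
        clm (lex_omega A le mult) (lex_omega_le le) (mult_omega mult) (one_omega one) \<and>
        distributive (lex_omega A le mult) (lex_omega_le le) (mult_omega mult))"
proof (intro conjI impI)
  assume h: "slm A le mult one \<and> finitely_distributive A le mult"
  have cm: "comm_monoid_on A mult one" and po: "partial_order_on_rel A le"
    and lubA: "\<And>X. finite X \<Longrightarrow> X \<subseteq> A \<Longrightarrow> \<exists>u. is_lub A le X u"
    using h unfolding slm_def by blast+
  have distA: "\<And>a X u. a \<in> A \<Longrightarrow> finite X \<Longrightarrow> X \<subseteq> A \<Longrightarrow> is_lub A le X u \<Longrightarrow>
        is_lub A le ((\<lambda>x. mult a x) ` X) (mult a u)"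
    using h unfolding finitely_distributive_def by blast
  have exb: "\<exists>u. is_lub A le {} u" using lubA by blast
  have bl: "is_lub A le {} (bot_of A le)" by (rule bot_of_lub[OF po exb])
  have absorb: "mult a (bot_of A le) = bot_of A le" if "a \<in> A" for a
  proof -
    have "is_lub A le {} (mult a (bot_of A le))" using distA[OF that _ _ bl] by simp
    then show ?thesis using po_lub_unique[OF po _ bl] by blast
  qed
  interpret lexb A le mult one using cm po exb absorb by unfold_locales
  have g1: "\<forall>X. finite X \<and> X \<subseteq> lex_omega A le mult \<longrightarrow> (\<exists>u. is_lub (lex_omega A le mult) (lex_omega_le le) X u)"
    and g2: "\<forall>a\<in>lex_omega A le mult. \<forall>X u. finite X \<and> X \<subseteq> lex_omega A le mult \<and> is_lub (lex_omega A le mult) (lex_omega_le le) X u \<longrightarrow>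
        is_lub (lex_omega A le mult) (lex_omega_le le) ((\<lambda>x. mult_omega mult a x) ` X) (mult_omega mult a u)"
  proof -
    have fimg: "\<And>(X::(nat \<Rightarrow> 'a) set) Y k. finite X \<Longrightarrow> Y \<subseteq> X \<Longrightarrow> finite ((\<lambda>x. x k) ` Y)"
      by (rule finite_imageI, rule finite_subset)
    show "\<forall>X. finite X \<and> X \<subseteq> lex_omega A le mult \<longrightarrow> (\<exists>u. is_lub (lex_omega A le mult) (lex_omega_le le) X u)"
      by (rule gen(1)[of finite finite, OF lubA fimg distA])
    show "\<forall>a\<in>lex_omega A le mult. \<forall>X u. finite X \<and> X \<subseteq> lex_omega A le mult \<and> is_lub (lex_omega A le mult) (lex_omega_le le) X u \<longrightarrow>
        is_lub (lex_omega A le mult) (lex_omega_le le) ((\<lambda>x. mult_omega mult a x) ` X) (mult_omega mult a u)"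
      by (rule gen(2)[of finite finite, OF lubA fimg distA])
  qed
  show "slm (lex_omega A le mult) (lex_omega_le le) (mult_omega mult) (one_omega one)"
    unfolding slm_def using cm_L po_L g1 by blast
  show "finitely_distributive (lex_omega A le mult) (lex_omega_le le) (mult_omega mult)"
    unfolding finitely_distributive_def using g2 by blast
next
  assume h: "clm A le mult one \<and> distributive A le mult"
  have cm: "comm_monoid_on A mult one" and po: "partial_order_on_rel A le"
    and lubA: "\<And>X. X \<subseteq> A \<Longrightarrow> \<exists>u. is_lub A le X u"
    using h unfolding clm_def by blast+
  have distA: "\<And>a X u. a \<in> A \<Longrightarrow> X \<subseteq> A \<Longrightarrow> is_lub A le X u \<Longrightarrow>
        is_lub A le ((\<lambda>x. mult a x) ` X) (mult a u)"
    using h unfolding distributive_def by blast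
  have exb: "\<exists>u. is_lub A le {} u" using lubA by blast
  have bl: "is_lub A le {} (bot_of A le)" by (rule bot_of_lub[OF po exb])
  have absorb: "mult a (bot_of A le) = bot_of A le" if "a \<in> A" for a
  proof -
    have "is_lub A le {} (mult a (bot_of A le))" using distA[OF that _ bl] by simp
    then show ?thesis using po_lub_unique[OF po _ bl] by blast
  qed
  interpret lexb A le mult one using cm po exb absorb by unfold_locales
  have g1: "\<forall>X. True \<and> X \<subseteq> lex_omega A le mult \<longrightarrow> (\<exists>u. is_lub (lex_omega A le mult) (lex_omega_le le) X u)"
    and g2: "\<forall>a\<in>lex_omega A le mult. \<forall>X u. True \<and> X \<subseteq> lex_omega A le mult \<and> is_lub (lex_omega A le mult) (lex_omega_le le) X u \<longrightarrow>
        is_lub (lex_omega A le mult) (lex_omega_le le) ((\<lambda>x. mult_omega mult a x) ` X) (mult_omega mult a u)"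
  proof -
    have l: "\<And>X. True \<Longrightarrow> X \<subseteq> A \<Longrightarrow> \<exists>u. is_lub A le X u" using lubA by blast
    have d: "\<And>a X u. a \<in> A \<Longrightarrow> True \<Longrightarrow> X \<subseteq> A \<Longrightarrow> is_lub A le X u \<Longrightarrow>
        is_lub A le ((\<lambda>x. mult a x) ` X) (mult a u)" using distA by blast
    have fimg: "\<And>(X::(nat \<Rightarrow> 'a) set) Y k. True \<Longrightarrow> Y \<subseteq> X \<Longrightarrow> True" by blast
    show "\<forall>X. True \<and> X \<subseteq> lex_omega A le mult \<longrightarrow> (\<exists>u. is_lub (lex_omega A le mult) (lex_omega_le le) X u)"
      by (rule gen(1)[of "\<lambda>_. True" "\<lambda>_. True", OF l fimg d])
    show "\<forall>a\<in>lex_omega A le mult. \<forall>X u. True \<and> X \<subseteq> lex_omega A le mult \<and> is_lub (lex_omega A le mult) (lex_omega_le le) X u \<longrightarrow>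
        is_lub (lex_omega A le mult) (lex_omega_le le) ((\<lambda>x. mult_omega mult a x) ` X) (mult_omega mult a u)"
      by (rule gen(2)[of "\<lambda>_. True" "\<lambda>_. True", OF l fimg d])
  qed
  show "clm (lex_omega A le mult) (lex_omega_le le) (mult_omega mult) (one_omega one)"
    unfolding clm_def using cm_L po_L g1 by blast
  show "distributive (lex_omega A le mult) (lex_omega_le le) (mult_omega mult)"
    unfolding distributive_def using g2 by blast
qed

end
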